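(* For any positive integer $k$, $$\sum_{\substack{n\ge1\\ k\mid n\\ p\mid n\Rightarrow p\mid k}}\frac{\log n}{n}=\frac{1}{\phi(k)}\left(\sum_{p\mid k}\frac{\log p}{p-1}+\log k\right)\asymp\frac{\log k}{\phi(k)}.$$
   Context: $p$ denotes primes, $\phi$ is Euler's function. $A\asymp B$ means $c_1B\le A\le c_2B$ for absolute positive constants $c_1,c_2$. *)

theory Defs
  imports "HOL-Analysis.Analysis" "HOL-Number_Theory.Number_Theory"
begin

definition kset :: "nat \<Rightarrow> nat set" where
  "kset k = {n. n \<ge> 1 \<and> k dvd n \<and> (\<forall>p. prime p \<longrightarrow> p dvd n \<longrightarrow> p dvd k)}"

definition kform :: "nat \<Rightarrow> real" where
  "kform k = (1 / real (totient k)) *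
     ((\<Sum>p\<in>prime_factors k. ln (real p) / (real p - 1)) + ln (real k))"

end

theory Submission
  imports Defs
begin

lemma prod_has_sum:
  fixes f :: "'a \<Rightarrow> real" and g :: "'b \<Rightarrow> real"
  assumes f0: "\<And>x. x\<in>A \<Longrightarrow> f x \<ge> 0" and g0: "\<And>y. y\<in>B \<Longrightarrow> g y \<ge> 0"
    and fa: "(f has_sum a) A" and gb: "(g has_sum b) B"
  shows "((\<lambda>(x,y). f x * g y) has_sum (a*b)) (A \<times> B)"
proof -
  have "(\<lambda>(x,y). f x * g y) summable_on A \<times> B"
  proof (rule nonneg_bdd_above_summable_on)
    show "\<And>x. x \<in> A \<times> B \<Longrightarrow> 0 \<le> (case x of (x, y) \<Rightarrow> f x * g y)"
      using f0 g0 by auto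
    show "bdd_above (sum (\<lambda>(x,y). f x * g y) ` {F. F \<subseteq> A \<times> B \<and> finite F})"
    proof (rule bdd_aboveI2)
      fix F assume F: "F \<in> {F. F \<subseteq> A \<times> B \<and> finite F}"
      have s1: "fst ` F \<subseteq> A" "snd ` F \<subseteq> B" using F by auto
      have fin: "finite (fst ` F)" "finite (snd ` F)" using F by auto
      have "sum (\<lambda>(x,y). f x * g y) F \<le> sum (\<lambda>(x,y). f x * g y) (fst ` F \<times> snd ` F)"
        apply (rule sum_mono2)
        using fin F s1 f0 g0 by (auto intro!: mult_nonneg_nonneg simp: image_iff) force+
      also have "\<dots> = sum f (fst ` F) * sum g (snd ` F)"
        by (simp add: sum_product sum.cartesian_product)
      also have "\<dots> \<le> a * b"
        apply (rule mult_mono)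
        using finite_sum_le_has_sum[OF fa fin(1) s1(1)] finite_sum_le_has_sum[OF gb fin(2) s1(2)]
          f0 g0 s1 has_sum_nonneg[OF fa f0]
        by (auto intro!: sum_nonneg)
      finally show "sum (\<lambda>(x,y). f x * g y) F \<le> a * b" .
    qed
  qed
  then show ?thesis
    apply (intro has_sum_SigmaI[where g = "\<lambda>x. f x * b"])
    using has_sum_cmult_right[OF gb] has_sum_cmult_left[OF fa] by auto
qed


definition S :: "nat set \<Rightarrow> nat set" where
  "S P = {m. m \<ge> 1 \<and> (\<forall>p. prime p \<longrightarrow> p dvd m \<longrightarrow> p \<in> P)}"

lemma S_empty: "S {} = {1}"
proof -
  have "m = 1" if "m \<ge> 1" "\<forall>p. prime p \<longrightarrow> \<not> p dvd m" for m :: nat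
    using that prime_factor_nat[of m] by force
  then show ?thesis unfolding S_def by auto
qed

lemma S_bij:
  assumes q: "prime (q::nat)" and qP: "q \<notin> P"
  shows "bij_betw (\<lambda>(a,m). q^a*m) (UNIV \<times> S P) (S (insert q P))"
proof -
  have nq: "\<not> q dvd m" if "m \<in> S P" for m
    using that q qP unfolding S_def by auto
  have q0: "q \<noteq> 0" using q by auto
  show ?thesis
  proof (rule bij_betwI')
    fix x y :: "nat \<times> nat" assume x: "x \<in> UNIV \<times> S P" and y: "y \<in> UNIV \<times> S P"
    obtain a m where xe: "x = (a,m)" by force
    obtain b m' where ye: "y = (b,m')" by force
    show "((case x of (a, m) \<Rightarrow> q ^ a * m) = (case y of (a, m) \<Rightarrow> q ^ a * m)) = (x = y)"
    proof
      assume eq: "(case x of (a, m) \<Rightarrow> q ^ a * m) = (case y of (a, m) \<Rightarrow> q ^ a * m)"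
      have "multiplicity q (q^a*m) = a"
        by (rule multiplicity_decomposeI) (use nq x xe q0 in auto)
      moreover have "multiplicity q (q^b*m') = b"
        by (rule multiplicity_decomposeI) (use nq y ye q0 in auto)
      ultimately have "a = b" using eq xe ye by auto
      then show "x = y" using eq xe ye q0 by auto
    qed auto
  next
    fix x :: "nat \<times> nat" assume x: "x \<in> UNIV \<times> S P"
    obtain a m where xe: "x = (a,m)" by force
    have m1: "m \<ge> 1" and mP: "\<And>p. prime p \<Longrightarrow> p dvd m \<Longrightarrow> p \<in> P"
      using x xe unfolding S_def by auto
    have "q^a*m \<ge> 1" using m1 q0 by (simp add: Suc_le_eq)
    moreover have "p \<in> insert q P" if "prime p" "p dvd q^a*m" for p
    proof -
      from that have "p dvd q^a \<or> p dvd m" using prime_dvd_mult_iff by blast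
      then show ?thesis
        using that mP q prime_dvd_power primes_dvd_imp_eq by blast
    qed
    ultimately show "(case x of (a, m) \<Rightarrow> q ^ a * m) \<in> S (insert q P)"
      using xe unfolding S_def by auto
  next
    fix n assume n: "n \<in> S (insert q P)"
    define a where "a = multiplicity q n"
    define m where "m = n div q^a"
    have n1: "n \<ge> 1" using n unfolding S_def by auto
    have ne: "n = q^a * m" unfolding m_def a_def by (simp add: multiplicity_dvd)
    have nqm: "\<not> q dvd m" unfolding m_def a_def using n1 q by (intro multiplicity_decompose) auto
    have "m \<ge> 1" using ne n1 by (cases "m = 0") auto
    moreover have "p \<in> P" if "prime p" "p dvd m" for p
    proof -
      have "p dvd n" using ne that by simp
      then have "p \<in> insert q P" using n that unfolding S_def by auto
      moreover have "p \<noteq> q" using nqm that by auto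
      ultimately show ?thesis by auto
    qed
    ultimately have "m \<in> S P" unfolding S_def by auto
    then show "\<exists>x\<in>UNIV \<times> S P. n = (case x of (a, m) \<Rightarrow> q ^ a * m)"
      using ne by auto
  qed
qed

lemma geom_has_sum:
  fixes x :: real assumes "0 \<le> x" "x < 1"
  shows "((\<lambda>a. x^a) has_sum (1/(1-x))) UNIV"
  by (rule sums_nonneg_imp_has_sum) (use geometric_sums[of x] assms in auto)

lemma geom_deriv_has_sum:
  fixes x :: real assumes "0 \<le> x" "x < 1"
  shows "((\<lambda>a. real a * x^a) has_sum (x/(1-x)^2)) UNIV"
proof (rule sums_nonneg_imp_has_sum)
  have "(\<lambda>n. x * (real (Suc n) * x ^ n)) sums (x * (1 / (1 - x)^2))"
    by (rule sums_mult, rule geometric_deriv_sums) (use assms in auto)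
  then have "(\<lambda>n. real (Suc n) * x ^ Suc n) sums (x/(1-x)^2)"
    by (simp add: algebra_simps)
  then show "(\<lambda>a. real a * x^a) sums (x/(1-x)^2)"
    using sums_Suc_iff[of "\<lambda>a. real a * x^a" "x/(1-x)^2"] by simp
  show "\<And>n. 0 \<le> real n * x ^ n" using assms by simp
qed


lemma alg_e2:
  fixes r l A L :: real assumes r: "r > 1"
  shows "((1/r)/(1-1/r)^2 * l) * A + 1/(1-1/r) * (A*L) = (r/(r-1)*A) * (l/(r-1) + L)"
proof -
  have e: "1 - 1/r = (r-1)/r" using r by (simp add: field_simps)
  have a: "(1/r)/(1-1/r)^2 = r/(r-1)/(r-1)" unfolding e using r
    by (simp add: power2_eq_square field_simps)
  have b: "1/(1-1/r) = r/(r-1)" unfolding e by simp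
  have c: "r/(r-1)/(r-1) = (r/(r-1)) * (1/(r-1))" "l/(r-1) = l * (1/(r-1))" by simp_all
  show ?thesis unfolding a b c by (simp only: ring_distribs mult_ac)
qed

lemma S_sums:
  assumes "finite P" "\<forall>p\<in>P. prime p"
  shows "((\<lambda>m. 1/real m) has_sum (\<Prod>p\<in>P. real p/(real p-1))) (S P) \<and>
         ((\<lambda>m. ln (real m)/real m) has_sum
            ((\<Prod>p\<in>P. real p/(real p-1)) * (\<Sum>p\<in>P. ln (real p)/(real p-1)))) (S P)"
  using assms
proof (induction P rule: finite_induct)
  case empty
  show ?case by (simp add: S_empty has_sum_finite_iff)
next
  case (insert q P)
  define A where "A = (\<Prod>p\<in>P. real p/(real p-1))"
  define L where "L = (\<Sum>p\<in>P. ln (real p)/(real p-1))"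
  define x where "x = 1 / real q"
  have q: "prime q" using insert by auto
  have r1: "real q > 1" using q prime_gt_1_nat by auto
  have x0: "0 \<le> x" "x < 1" using r1 unfolding x_def by auto
  have IH1: "((\<lambda>m. 1/real m) has_sum A) (S P)"
   and IH2: "((\<lambda>m. ln (real m)/real m) has_sum (A*L)) (S P)"
    using insert unfolding A_def L_def by auto
  have Spos: "m \<ge> 1" if "m \<in> S P" for m using that unfolding S_def by auto
  have bij: "bij_betw (\<lambda>(a,m). q^a*m) (UNIV \<times> S P) (S (insert q P))"
    using S_bij[OF q insert(2)] .
  have h1: "((\<lambda>(a,m). x^a * (1/real m)) has_sum (1/(1-x) * A)) (UNIV \<times> S P)"
    by (rule prod_has_sum[OF _ _ geom_has_sum[OF x0] IH1]) (use x0 in auto)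
  have "((\<lambda>y. (\<lambda>n. 1/real n) ((\<lambda>(a,m). q^a*m) y)) has_sum (1/(1-x) * A)) (UNIV \<times> S P)
        \<longleftrightarrow> ((\<lambda>(a,m). x^a * (1/real m)) has_sum (1/(1-x) * A)) (UNIV \<times> S P)"
    by (intro has_sum_cong) (auto simp: x_def power_divide)
  with h1 have g1: "((\<lambda>n. 1/real n) has_sum (1/(1-x) * A)) (S (insert q P))"
    using has_sum_reindex_bij_betw[OF bij] by blast
  have h2: "((\<lambda>(a,m). (real a * x^a * ln (real q)) * (1/real m)) has_sum
              ((x/(1-x)^2 * ln (real q)) * A)) (UNIV \<times> S P)"
    by (rule prod_has_sum[OF _ _ has_sum_cmult_left[OF geom_deriv_has_sum[OF x0]] IH1])
       (use x0 r1 in auto)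
  have h3: "((\<lambda>(a,m). x^a * (ln (real m)/real m)) has_sum (1/(1-x) * (A*L))) (UNIV \<times> S P)"
    by (rule prod_has_sum[OF _ _ geom_has_sum[OF x0] IH2]) (use x0 Spos in auto)
  have h4: "((\<lambda>y. (case y of (a,m) \<Rightarrow> (real a * x^a * ln (real q)) * (1/real m))
                + (case y of (a,m) \<Rightarrow> x^a * (ln (real m)/real m)))
            has_sum ((x/(1-x)^2 * ln (real q)) * A + 1/(1-x) * (A*L))) (UNIV \<times> S P)"
    by (rule has_sum_add[OF h2 h3])
  have "((\<lambda>y. (\<lambda>n. ln (real n)/real n) ((\<lambda>(a,m). q^a*m) y)) has_sum
              ((x/(1-x)^2 * ln (real q)) * A + 1/(1-x) * (A*L))) (UNIV \<times> S P)
        \<longleftrightarrow> ((\<lambda>y. (case y of (a,m) \<Rightarrow> (real a * x^a * ln (real q)) * (1/real m))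
                + (case y of (a,m) \<Rightarrow> x^a * (ln (real m)/real m)))
            has_sum ((x/(1-x)^2 * ln (real q)) * A + 1/(1-x) * (A*L))) (UNIV \<times> S P)"
  proof (intro has_sum_cong)
    fix y :: "nat \<times> nat" assume y: "y \<in> UNIV \<times> S P"
    obtain a m where ye: "y = (a,m)" by force
    have m1: "real m \<ge> 1" using y ye Spos by auto
    have "ln (real (q^a*m)) = real a * ln (real q) + ln (real m)"
      using m1 r1 by (simp add: ln_mult ln_realpow)
    then show "(\<lambda>n. ln (real n)/real n) ((\<lambda>(a,m). q^a*m) y) =
        (case y of (a,m) \<Rightarrow> (real a * x^a * ln (real q)) * (1/real m))
                + (case y of (a,m) \<Rightarrow> x^a * (ln (real m)/real m))"
      using ye m1 r1 by (simp add: x_def power_divide field_simps)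
  qed
  with h4 have g2: "((\<lambda>n. ln (real n)/real n) has_sum
              ((x/(1-x)^2 * ln (real q)) * A + 1/(1-x) * (A*L))) (S (insert q P))"
    using has_sum_reindex_bij_betw[OF bij] by blast
  have e1: "1/(1-x) * A = (\<Prod>p\<in>insert q P. real p/(real p-1))"
    using insert(1,2) r1 unfolding A_def x_def by (simp add: field_simps)
  have e2: "(x/(1-x)^2 * ln (real q)) * A + 1/(1-x) * (A*L) =
     (\<Prod>p\<in>insert q P. real p/(real p-1)) * (\<Sum>p\<in>insert q P. ln (real p)/(real p-1))"
    using insert(1,2) alg_e2[OF r1, of "ln (real q)" A L] unfolding A_def L_def x_def
    by (simp add: algebra_simps)
  show ?case using g1 g2 e1 e2 by simp
qed


lemma kset_bij:
  assumes k: "k \<ge> 1"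
  shows "bij_betw (\<lambda>m. k*m) (S (prime_factors k)) (kset k)"
proof (rule bij_betwI')
  fix x y assume "x \<in> S (prime_factors k)" "y \<in> S (prime_factors k)"
  then show "(k * x = k * y) = (x = y)" using k by auto
next
  fix m assume m: "m \<in> S (prime_factors k)"
  have "m \<ge> 1" using m unfolding S_def by auto
  then have "k*m \<ge> 1" using k by (simp add: Suc_le_eq)
  moreover have "p dvd k" if "prime p" "p dvd k*m" for p
  proof -
    have "p dvd k \<or> p dvd m" using that prime_dvd_mult_iff by blast
    then show ?thesis using m that unfolding S_def by (auto simp: in_prime_factors_iff)
  qed
  ultimately show "k*m \<in> kset k" unfolding kset_def by auto
next
  fix n assume n: "n \<in> kset k"
  then obtain m where ne: "n = k*m" unfolding kset_def by auto
  have n1: "n \<ge> 1" and nP: "\<And>p. prime p \<Longrightarrow> p dvd n \<Longrightarrow> p dvd k"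
    using n unfolding kset_def by auto
  have "m \<ge> 1" using n1 ne by (cases "m = 0") auto
  moreover have "p \<in> prime_factors k" if "prime p" "p dvd m" for p
    using nP[of p] that ne k by (auto simp: in_prime_factors_iff)
  ultimately have "m \<in> S (prime_factors k)" unfolding S_def by auto
  then show "\<exists>m\<in>S (prime_factors k). n = k*m" using ne by auto
qed

lemma part1:
  assumes k: "(k::nat) \<ge> 1"
  shows "((\<lambda>n. ln (real n) / real n) has_sum kform k) (kset k)"
proof -
  define P where "P = prime_factors k"
  define A where "A = (\<Prod>p\<in>P. real p/(real p-1))"
  define L where "L = (\<Sum>p\<in>P. ln (real p)/(real p-1))"
  have fin: "finite P" "\<forall>p\<in>P. prime p" unfolding P_def by auto
  have h1: "((\<lambda>m. 1/real m) has_sum A) (S P)"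
   and h2: "((\<lambda>m. ln (real m)/real m) has_sum (A*L)) (S P)"
    using S_sums[OF fin] unfolding A_def L_def by auto
  have Spos: "m \<ge> 1" if "m \<in> S P" for m using that unfolding S_def by auto
  have rk: "real k \<ge> 1" using k by simp
  have h: "((\<lambda>m. ln (real k)/real k * (1/real m) + 1/real k * (ln (real m)/real m)) has_sum
          (ln (real k)/real k * A + 1/real k * (A*L))) (S P)"
    by (intro has_sum_add has_sum_cmult_right h1 h2)
  have "((\<lambda>m. (\<lambda>n. ln (real n) / real n) (k*m)) has_sum (ln (real k)/real k * A + 1/real k * (A*L))) (S P)
     \<longleftrightarrow> ((\<lambda>m. ln (real k)/real k * (1/real m) + 1/real k * (ln (real m)/real m)) has_sum
          (ln (real k)/real k * A + 1/real k * (A*L))) (S P)"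
  proof (intro has_sum_cong)
    fix m assume "m \<in> S P"
    then have m1: "real m \<ge> 1" using Spos by auto
    show "(\<lambda>n. ln (real n) / real n) (k*m) = ln (real k)/real k * (1/real m) + 1/real k * (ln (real m)/real m)"
      using m1 rk by (simp add: ln_mult field_simps)
  qed
  with h have g: "((\<lambda>n. ln (real n) / real n) has_sum (ln (real k)/real k * A + 1/real k * (A*L))) (kset k)"
    using has_sum_reindex_bij_betw[OF kset_bij[OF k]] unfolding P_def by blast
  have tot: "real (totient k) = real k * (\<Prod>p\<in>P. 1 - 1 / real p)"
    unfolding P_def by (rule totient_formula2)
  have "A * (\<Prod>p\<in>P. 1 - 1 / real p) = (\<Prod>p\<in>P. real p/(real p-1) * (1 - 1/real p))"
    unfolding A_def by (simp only: prod.distrib)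
  also have "\<dots> = 1"
  proof (rule prod.neutral, rule ballI)
    fix p assume "p \<in> P"
    then have "real p > 1" using fin prime_gt_1_nat by auto
    then show "real p/(real p-1) * (1 - 1/real p) = 1" by (simp add: field_simps)
  qed
  finally have Ainv: "A * (\<Prod>p\<in>P. 1 - 1 / real p) = 1" .
  have X0: "(\<Prod>p\<in>P. 1 - 1 / real p) \<noteq> 0" using Ainv by auto
  have AX: "A = 1 / (\<Prod>p\<in>P. 1 - 1 / real p)" using X0 Ainv by (simp add: field_simps)
  have "A / real k = 1 / real (totient k)"
    unfolding tot AX by simp
  moreover have "ln (real k)/real k * A + 1/real k * (A*L) = (A / real k) * (L + ln (real k))"
    using rk by (simp add: field_simps)
  ultimately have "ln (real k)/real k * A + 1/real k * (A*L) = kform k"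
    unfolding kform_def P_def[symmetric] L_def[symmetric] by simp
  with g show ?thesis by simp
qed


lemma part2:
  assumes k: "(k::nat) \<ge> 1"
  shows "1 * (ln (real k) / real (totient k)) \<le> kform k \<and>
         kform k \<le> 2 * (ln (real k) / real (totient k))"
proof -
  define P where "P = prime_factors k"
  define L where "L = (\<Sum>p\<in>P. ln (real p)/(real p-1))"
  have fin: "finite P" by (simp add: P_def)
  have pr: "\<And>p. p \<in> P \<Longrightarrow> prime p" unfolding P_def by auto
  have p1: "\<And>p. p \<in> P \<Longrightarrow> real p > 1" using pr prime_gt_1_nat by fastforce
  have L0: "L \<ge> 0" unfolding L_def
  proof (rule sum_nonneg)
    fix p assume "p \<in> P"
    then have "real p > 1" using p1 by auto
    then show "0 \<le> ln (real p)/(real p-1)" by (intro divide_nonneg_nonneg) auto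
  qed
  have "L \<le> (\<Sum>p\<in>P. ln (real p))" unfolding L_def
  proof (rule sum_mono)
    fix p assume "p \<in> P"
    then have "real p > 1" using p1 by auto
    then show "ln (real p)/(real p-1) \<le> ln (real p)"
      by (simp add: divide_le_eq)
  qed
  also have "\<dots> = ln (\<Prod>p\<in>P. real p)" 
  proof -
    have ppos: "\<And>p. p \<in> P \<Longrightarrow> real p \<noteq> 0" using p1 by force
    show ?thesis using ln_prod[OF fin ppos] by simp
  qed
  also have "\<dots> \<le> ln (real k)"
  proof -
    have "(\<Prod>p\<in>P. real p) \<le> (\<Prod>p\<in>P. real p ^ multiplicity p k)"
    proof (rule prod_mono)
      fix p assume pP: "p \<in> P"
      have "multiplicity p k > 0" using pP unfolding P_def prime_factors_multiplicity by auto
      then show "0 \<le> real p \<and> real p \<le> real p ^ multiplicity p k"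
        using p1[OF pP] power_increasing[of 1 "multiplicity p k" "real p"] by simp
    qed
    also have "\<dots> = real k"
      using prime_factorization_nat[of k] k unfolding P_def
      by (simp add: of_nat_prod[symmetric] of_nat_power[symmetric] del: of_nat_prod of_nat_power)
    finally have le: "(\<Prod>p\<in>P. real p) \<le> real k" .
    have p0: "\<And>p. p \<in> P \<Longrightarrow> real p > 0" using p1 by (meson less_trans zero_less_one)
    have "(\<Prod>p\<in>P. real p) > 0" by (rule prod_pos, rule p0)
    then show ?thesis using le by simp
  qed
  finally have Lk: "L \<le> ln (real k)" .
  have t0: "real (totient k) > 0" using k by simp
  have lk0: "ln (real k) \<ge> 0" using k by simp
  have kf: "kform k = (L + ln (real k)) / real (totient k)"
    unfolding kform_def L_def P_def by simp
  have a1: "ln (real k) / real (totient k) \<le> (L + ln (real k)) / real (totient k)"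
    by (rule divide_right_mono) (use L0 t0 in auto)
  have a2: "(L + ln (real k)) / real (totient k) \<le> (2 * ln (real k)) / real (totient k)"
    by (rule divide_right_mono) (use Lk t0 in auto)
  show ?thesis unfolding kf using a1 a2 by simp
qed

theorem lemma3p3:
  shows "(\<forall>k::nat. k \<ge> 1 \<longrightarrow>
            ((\<lambda>n. ln (real n) / real n) has_sum kform k) (kset k))
       \<and> (\<exists>c1 c2::real. c1 > 0 \<and> c2 > 0 \<and>
            (\<forall>k::nat. k \<ge> 1 \<longrightarrow>
               c1 * (ln (real k) / real (totient k)) \<le> kform k \<and>
               kform k \<le> c2 * (ln (real k) / real (totient k))))"
  using part1 part2 by (intro conjI allI impI exI[of _ 1] exI[of _ 2]) auto

end
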